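(* Let $\dot x = Ax+\sum_{i=1}^mB_iu_i$, $y_i=C_ix$ be an $n$-dimensional $m$-channel continuous-time linear system with neighbor graph $\mathbb{N}$, let $n_i>0$ for all $i\in\{1,\dots,m\}$, and let $\{\bar A,\bar B_i,\bar C_i;m\}$ be the extended system with $\bar A=\begin{bmatrix}A&0\\0&0\end{bmatrix}$, $\bar B_i=\begin{bmatrix}B_i&0\\0&E_i\end{bmatrix}$, $\bar C_i=\begin{bmatrix}C_i&0\\0&E_{\mathcal{N}_i}'\end{bmatrix}$, where $E_i$ is the $(\sum_kn_k)\times n_i$ block column matrix with $I_{n_i}$ as its $i$th block and zeros elsewhere and $E_{\mathbf{s}}=[E_{i_1}\ \cdots\ E_{i_s}]$ for $\mathbf{s}=\{i_1<\dots<i_s\}$. Then the transfer graph of the extended system is strongly connected if and only if the union of the transfer graph and the neighbor graph of the original system is strongly connected.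
   Context: The neighbor graph is a directed graph on $\{1,\dots,m\}$ with an arc $j\to i$ iff $j$ is a neighbor of $i$; $\mathcal{N}_i$ is the set of neighbors of $i$ including $i$. The transfer graph of an $m$-channel system $\{A,B_i,C_i;m\}$ is the directed graph on $\{1,\dots,m\}$ with an arc from $j$ to $i$ whenever the transfer matrix $C_i(sI-A)^{-1}B_j\neq0$. The union of two directed graphs on the same $m$ vertices is the directed graph on those vertices whose arc set is the union of their arc sets. Strongly connected: directed paths exist between every ordered pair of vertices. *)

theory Defs
  imports Complex_Main "Jordan_Normal_Form.Matrix"
begin

text \<open>Channels are indexed 0,...,m-1 (the paper uses 1,...,m).\<close>

text \<open>Transfer matrix C (sI - A)^{-1} B is nonzero as a rational matrix:
  it is nonzero at some complex s where sI - A is invertible.\<close>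
definition transfer_nonzero :: "real mat \<Rightarrow> real mat \<Rightarrow> real mat \<Rightarrow> bool" where
  "transfer_nonzero A B C \<longleftrightarrow>
     (\<exists>(s::complex) X. inverts_mat (s \<cdot>\<^sub>m 1\<^sub>m (dim_row A) - map_mat complex_of_real A) X
        \<and> inverts_mat X (s \<cdot>\<^sub>m 1\<^sub>m (dim_row A) - map_mat complex_of_real A)
        \<and> map_mat complex_of_real C * X * map_mat complex_of_real B
            \<noteq> 0\<^sub>m (dim_row C) (dim_col B))"

text \<open>Transfer graph: arc (j,i) (from j to i) iff C_i (sI-A)^{-1} B_j \<noteq> 0.\<close>
definition transfer_graph :: "nat \<Rightarrow> real mat \<Rightarrow> (nat \<Rightarrow> real mat) \<Rightarrow> (nat \<Rightarrow> real mat) \<Rightarrow> (nat \<times> nat) set" where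
  "transfer_graph m A B C = {(j,i). j < m \<and> i < m \<and> transfer_nonzero A (B j) (C i)}"

definition neighbor_graph :: "nat \<Rightarrow> (nat \<Rightarrow> nat set) \<Rightarrow> (nat \<times> nat) set" where
  "neighbor_graph m Nb = {(j,i). j < m \<and> i < m \<and> j \<in> Nb i}"

definition strongly_connected :: "nat \<Rightarrow> (nat \<times> nat) set \<Rightarrow> bool" where
  "strongly_connected m G \<longleftrightarrow> (\<forall>i<m. \<forall>j<m. (i,j) \<in> G\<^sup>*)"

definition blk_off :: "(nat \<Rightarrow> nat) \<Rightarrow> nat \<Rightarrow> nat" where
  "blk_off nn i = (\<Sum>k<i. nn k)"

text \<open>E_i: (sum_k n_k) x n_i block column with I_{n_i} as i-th block.\<close>
definition Emat :: "nat \<Rightarrow> (nat \<Rightarrow> nat) \<Rightarrow> nat \<Rightarrow> real mat" where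
  "Emat m nn i = mat (\<Sum>k<m. nn k) (nn i)
      (\<lambda>(r,c). if r = blk_off nn i + c then 1 else 0)"

text \<open>Horizontal concatenation [E_{i_1} ... E_{i_s}] along a list of indices.\<close>
fun Ecat :: "nat \<Rightarrow> (nat \<Rightarrow> nat) \<Rightarrow> nat list \<Rightarrow> real mat" where
  "Ecat m nn [] = 0\<^sub>m (\<Sum>k<m. nn k) 0"
| "Ecat m nn (i # is) = four_block_mat (Emat m nn i) (Ecat m nn is)
      (0\<^sub>m 0 (nn i)) (0\<^sub>m 0 (dim_col (Ecat m nn is)))"

definition Eset :: "nat \<Rightarrow> (nat \<Rightarrow> nat) \<Rightarrow> nat set \<Rightarrow> real mat" where
  "Eset m nn S = Ecat m nn (sorted_list_of_set S)"

definition ext_A :: "nat \<Rightarrow> (nat \<Rightarrow> nat) \<Rightarrow> real mat \<Rightarrow> real mat" where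
  "ext_A m nn A = (let N = (\<Sum>k<m. nn k) in
     four_block_mat A (0\<^sub>m (dim_row A) N) (0\<^sub>m N (dim_col A)) (0\<^sub>m N N))"

definition ext_B :: "nat \<Rightarrow> (nat \<Rightarrow> nat) \<Rightarrow> (nat \<Rightarrow> real mat) \<Rightarrow> nat \<Rightarrow> real mat" where
  "ext_B m nn B i = (let N = (\<Sum>k<m. nn k) in
     four_block_mat (B i) (0\<^sub>m (dim_row (B i)) (nn i)) (0\<^sub>m N (dim_col (B i))) (Emat m nn i))"

definition ext_C :: "nat \<Rightarrow> (nat \<Rightarrow> nat) \<Rightarrow> (nat \<Rightarrow> nat set) \<Rightarrow> (nat \<Rightarrow> real mat) \<Rightarrow> nat \<Rightarrow> real mat" where
  "ext_C m nn Nb C i = (let N = (\<Sum>k<m. nn k); Et = transpose_mat (Eset m nn (Nb i)) in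
     four_block_mat (C i) (0\<^sub>m (dim_row (C i)) N) (0\<^sub>m (dim_row Et) (dim_col (C i))) Et)"

end

theory Submission
  imports Defs "Jordan_Normal_Form.Char_Poly"
begin


lemma mat_delete_map: "mat_delete (map_mat f P) i j = map_mat f (mat_delete P i j)"
  unfolding mat_delete_def by (rule eq_matI) auto

lemma adj_eval:
  fixes P :: "'a::comm_ring_1 poly mat"
  assumes P: "P \<in> carrier_mat n n"
  shows "map_mat (\<lambda>p. poly p s) (adj_mat P) = adj_mat (map_mat (\<lambda>p. poly p s) P)"
proof (rule eq_matI)
  fix i j assume i: "i < dim_row (adj_mat (map_mat (\<lambda>p. poly p s) P))"
    and j: "j < dim_col (adj_mat (map_mat (\<lambda>p. poly p s) P))"
  have "poly (det (mat_delete P j i)) s = det (mat_delete (map_mat (\<lambda>p. poly p s) P) j i)"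
    unfolding mat_delete_map
    by (rule poly_det_cong[of _ "n - 1"]) (use P in \<open>auto intro: mat_delete_carrier\<close>)
  then show "map_mat (\<lambda>p. poly p s) (adj_mat P) $$ (i, j) = adj_mat (map_mat (\<lambda>p. poly p s) P) $$ (i, j)"
    using i j unfolding adj_mat_def cofactor_def by (simp add: poly_power)
qed (auto simp: adj_mat_def)

lemma poly_mat_mult:
  fixes F G :: "'a::comm_ring_1 poly mat"
  assumes "F \<in> carrier_mat a b" "G \<in> carrier_mat b c"
  shows "map_mat (\<lambda>p. poly p s) (F * G) = map_mat (\<lambda>p. poly p s) F * map_mat (\<lambda>p. poly p s) G"
  using assms by (intro eq_matI) (auto simp: scalar_prod_def poly_sum intro!: sum.cong)

lemma unique_inverse:
  fixes K :: "'a::comm_ring_1 mat"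
  assumes K: "K \<in> carrier_mat N N"
    and "inverts_mat K X" "inverts_mat X K" "inverts_mat K Y" "inverts_mat Y K"
  shows "X = Y"
proof -
  have X: "X \<in> carrier_mat N N" using assms unfolding inverts_mat_def
    by (metis carrier_matD index_mult_mat(2,3) index_one_mat(2,3) carrier_matI)
  have Y: "Y \<in> carrier_mat N N" using assms unfolding inverts_mat_def
    by (metis carrier_matD index_mult_mat(2,3) index_one_mat(2,3) carrier_matI)
  have kx: "K * X = 1\<^sub>m N" "X * K = 1\<^sub>m N" "K * Y = 1\<^sub>m N" using assms X unfolding inverts_mat_def by auto
  have "X = X * (K * Y)" using kx X by simp
  also have "\<dots> = (X * K) * Y" using X K Y by (simp add: assoc_mult_mat)
  also have "\<dots> = Y" using kx Y by simp
  finally show "X = Y" .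
qed

lemma inverse_props:
  fixes K :: "'a::comm_ring_1 mat"
  assumes K: "K \<in> carrier_mat N N"
    and "inverts_mat K X" "inverts_mat X K"
  shows "X \<in> carrier_mat N N" "det K \<noteq> 0"
proof -
  show X: "X \<in> carrier_mat N N" using assms unfolding inverts_mat_def
    by (metis carrier_matD index_mult_mat(2,3) index_one_mat(2,3) carrier_matI)
  have kx: "K * X = 1\<^sub>m N" using assms X unfolding inverts_mat_def by auto
  have "det K * det X = 1" using det_mult[OF K X] kx by simp
  then show "det K \<noteq> 0" by auto
qed

lemma adj_inverse:
  fixes K :: "'a::field mat"
  assumes K: "K \<in> carrier_mat N N" and d: "det K \<noteq> 0"
  shows "inverts_mat K ((1 / det K) \<cdot>\<^sub>m adj_mat K)" "inverts_mat ((1 / det K) \<cdot>\<^sub>m adj_mat K) K"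
  using adj_mat[OF K] K d unfolding inverts_mat_def
  by (auto simp: mult_smult_distrib mult_smult_assoc_mat)

lemma eval_cpm:
  fixes A :: "'a::comm_ring_1 mat"
  assumes A: "A \<in> carrier_mat n n"
  shows "map_mat (\<lambda>p. poly p s) (char_poly_matrix A) = s \<cdot>\<^sub>m 1\<^sub>m n - A"
  using A by (intro eq_matI) (auto simp: char_poly_matrix_def)

lemma eval_const:
  "map_mat (\<lambda>p. poly p s) (map_mat (\<lambda>x. [:x:]) C) = C"
  by (intro eq_matI) auto

lemma tn_complex:
  fixes A B C X :: "complex mat"
  assumes A: "A \<in> carrier_mat n n" and B: "B \<in> carrier_mat n p" and C: "C \<in> carrier_mat q n"
    and inv1: "inverts_mat (s0 \<cdot>\<^sub>m 1\<^sub>m n - A) X" and inv2: "inverts_mat X (s0 \<cdot>\<^sub>m 1\<^sub>m n - A)"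
    and nz: "C * X * B \<noteq> 0\<^sub>m q p" and F: "finite F"
  shows "\<exists>s. s \<notin> F \<and> det (s \<cdot>\<^sub>m 1\<^sub>m n - A) \<noteq> 0 \<and> C * adj_mat (s \<cdot>\<^sub>m 1\<^sub>m n - A) * B \<noteq> 0\<^sub>m q p"
proof -
  define M where "M = s0 \<cdot>\<^sub>m 1\<^sub>m n - A"
  have M: "M \<in> carrier_mat n n" using A unfolding M_def by auto
  note ip = inverse_props[OF M inv1[folded M_def] inv2[folded M_def]]
  define d where "d = det M"
  have d: "d \<noteq> 0" using ip unfolding d_def by auto
  have "X = (1/d) \<cdot>\<^sub>m adj_mat M"
    using unique_inverse[OF M inv1[folded M_def] inv2[folded M_def] adj_inverse[OF M ip(2)]]
    unfolding d_def .
  then have "C * X * B = (1/d) \<cdot>\<^sub>m (C * adj_mat M * B)"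
    using adj_mat(1)[OF M] B C
    by (simp add: mult_smult_distrib[of C q n "adj_mat M" n] mult_smult_assoc_mat[of "C * adj_mat M" q n B p] del: assoc_mult_mat)
  with nz have "C * adj_mat M * B \<noteq> 0\<^sub>m q p" by auto
  then obtain a b where ab: "a < q" "b < p" "(C * adj_mat M * B) $$ (a,b) \<noteq> 0"
    using adj_mat[OF M] B C by (metis (no_types, lifting) carrier_matD(1,2) eq_matI index_mult_mat(2,3) index_zero_mat(1,2,3))
  define P where "P = char_poly_matrix A"
  define Q where "Q = map_mat (\<lambda>x. [:x:]) C * adj_mat P * map_mat (\<lambda>x. [:x:]) B"
  have P: "P \<in> carrier_mat n n" using A unfolding P_def by auto
  have ev: "poly (Q $$ (a,b)) s = (C * adj_mat (s \<cdot>\<^sub>m 1\<^sub>m n - A) * B) $$ (a,b)" for s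
  proof -
    have "map_mat (\<lambda>p. poly p s) Q = C * adj_mat (s \<cdot>\<^sub>m 1\<^sub>m n - A) * B"
      unfolding Q_def
      apply (subst poly_mat_mult[of _ q n _ p])
      using C B P adj_mat(1)[OF P] apply auto[2]
      apply (subst poly_mat_mult[of _ q n _ n])
      using C B P adj_mat(1)[OF P] apply auto[2]
      apply (simp add: eval_const adj_eval[OF P] eval_cpm[OF A, folded P_def])
      done
    moreover have "a < dim_row Q" "b < dim_col Q" using ab unfolding Q_def using C B by auto
    ultimately show ?thesis by (metis index_map_mat(1))
  qed
  have cp: "poly (char_poly A) s = det (s \<cdot>\<^sub>m 1\<^sub>m n - A)" for s
    unfolding char_poly_def
    by (rule poly_det_cong[of _ n]) (use A in \<open>auto simp: char_poly_matrix_def\<close>)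
  define R where "R = Q $$ (a,b) * char_poly A"
  have "poly R s0 \<noteq> 0" unfolding R_def using ev[of s0] cp[of s0] ab d
    unfolding M_def d_def by simp
  then have "R \<noteq> 0" by auto
  then have fin: "finite ({s. poly R s = 0} \<union> F)" using poly_roots_finite F by auto
  obtain s where s: "s \<notin> {s. poly R s = 0} \<union> F"
    using ex_new_if_finite[OF infinite_UNIV_char_0 fin] by auto
  have "(C * adj_mat (s \<cdot>\<^sub>m 1\<^sub>m n - A) * B) $$ (a,b) \<noteq> 0" "det (s \<cdot>\<^sub>m 1\<^sub>m n - A) \<noteq> 0"
    using s ev[of s] cp[of s] unfolding R_def by auto
  then show ?thesis using s ab by (intro exI[of _ s]) auto
qed



lemma Emat_dims[simp]: "dim_row (Emat m nn i) = (\<Sum>k<m. nn k)" "dim_col (Emat m nn i) = nn i"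
  unfolding Emat_def by auto

lemma Ecat_dims: "dim_row (Ecat m nn l) = (\<Sum>k<m. nn k)" "dim_col (Ecat m nn l) = sum_list (map nn l)"
  by (induct l) auto


lemma Ecat_nz:
  assumes k: "k < (\<Sum>k<m. nn k)"
  shows "(\<exists>c<dim_col (Ecat m nn l). Ecat m nn l $$ (k,c) \<noteq> 0) \<longleftrightarrow> (\<exists>i\<in>set l. \<exists>c<nn i. k = blk_off nn i + c)"
proof (induct l)
  case Nil
  then show ?case by (simp add: Ecat_dims)
next
  case (Cons i l)
  let ?E = "Ecat m nn (i # l)"
  have e: "?E $$ (k,c) = (if c < nn i then (if k = blk_off nn i + c then 1 else 0) else Ecat m nn l $$ (k, c - nn i))"
    if "c < dim_col ?E" for c
    using that k by (simp add: Ecat_dims Emat_def)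
  have "(\<exists>c<dim_col ?E. ?E $$ (k,c) \<noteq> 0) \<longleftrightarrow>
     (\<exists>c<nn i. k = blk_off nn i + c) \<or> (\<exists>c<dim_col (Ecat m nn l). Ecat m nn l $$ (k,c) \<noteq> 0)"
  proof
    assume "\<exists>c<dim_col ?E. ?E $$ (k,c) \<noteq> 0"
    then obtain c where c: "c < dim_col ?E" "?E $$ (k,c) \<noteq> 0" by auto
    show "(\<exists>c<nn i. k = blk_off nn i + c) \<or> (\<exists>c<dim_col (Ecat m nn l). Ecat m nn l $$ (k,c) \<noteq> 0)"
    proof (cases "c < nn i")
      case True then show ?thesis using c e[OF c(1)] by (auto split: if_splits)
    next
      case False then show ?thesis using c e[OF c(1)] 
        by (intro disjI2 exI[of _ "c - nn i"]) (auto simp: Ecat_dims)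
    qed
  next
    assume "(\<exists>c<nn i. k = blk_off nn i + c) \<or> (\<exists>c<dim_col (Ecat m nn l). Ecat m nn l $$ (k,c) \<noteq> 0)"
    then show "\<exists>c<dim_col ?E. ?E $$ (k,c) \<noteq> 0"
    proof
      assume "\<exists>c<nn i. k = blk_off nn i + c"
      then obtain c where "c < nn i" "k = blk_off nn i + c" by auto
      then show ?thesis using e[of c] by (intro exI[of _ c]) (auto simp: Ecat_dims)
    next
      assume "\<exists>c<dim_col (Ecat m nn l). Ecat m nn l $$ (k,c) \<noteq> 0"
      then obtain c where c: "c < dim_col (Ecat m nn l)" "Ecat m nn l $$ (k,c) \<noteq> 0" by auto
      then show ?thesis using e[of "c + nn i"] by (intro exI[of _ "c + nn i"]) (auto simp: Ecat_dims)
    qed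
  qed
  then show ?case using Cons by auto
qed

lemma blk_off_mono: "i < j \<Longrightarrow> blk_off nn i + nn i \<le> blk_off nn j"
proof -
  assume "i < j"
  then have "blk_off nn i + nn i = (\<Sum>k<Suc i. nn k)" unfolding blk_off_def by simp
  also have "\<dots> \<le> (\<Sum>k<j. nn k)" using \<open>i < j\<close> by (intro sum_mono2) auto
  finally show ?thesis unfolding blk_off_def .
qed

lemma blk_disj:
  assumes "blk_off nn i + c = blk_off nn j + c'" "c < nn i" "c' < nn j"
  shows "i = j"
proof (rule ccontr)
  assume "i \<noteq> j"
  then consider "i < j" | "j < i" by linarith
  then show False
  proof cases
    case 1 then show ?thesis using blk_off_mono[OF 1, of nn] assms by linarith
  next
    case 2 then show ?thesis using blk_off_mono[OF 2, of nn] assms by linarith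
  qed
qed

lemma blk_bound: "j < m \<Longrightarrow> c < nn j \<Longrightarrow> blk_off nn j + c < (\<Sum>k<m. nn k)"
  using blk_off_mono[of j m nn] unfolding blk_off_def 
  by (metis add_less_cancel_left blk_off_def leI less_le_trans not_less_iff_gr_or_eq sum.lessThan_Suc sum_mono2 finite_lessThan lessThan_subset_iff Suc_leI)

lemma ET_nz:
  assumes S: "finite S" and j: "j < m" and nj: "nn j > 0"
  shows "transpose_mat (Eset m nn S) * Emat m nn j \<noteq> 0\<^sub>m (dim_col (Eset m nn S)) (nn j) \<longleftrightarrow> j \<in> S"
proof -
  let ?l = "sorted_list_of_set S"
  let ?E = "Ecat m nn ?l"
  let ?N = "\<Sum>k<m. nn k"
  have ent: "(transpose_mat ?E * Emat m nn j) $$ (r,c) = ?E $$ (blk_off nn j + c, r)"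
    if r: "r < dim_col ?E" and c: "c < nn j" for r c
  proof -
    have b: "blk_off nn j + c < ?N" using blk_bound[where nn=nn, OF j c] .
    have "(transpose_mat ?E * Emat m nn j) $$ (r,c) = (\<Sum>k\<in>{0..<?N}. ?E $$ (k, r) * (if k = blk_off nn j + c then 1 else 0))"
      using r c by (simp add: scalar_prod_def Ecat_dims Emat_def)
    also have "\<dots> = ?E $$ (blk_off nn j + c, r)"
      using b by (simp add: mult.commute[of _ "if _ then _ else _"] if_distrib cong: if_cong)
    finally show ?thesis .
  qed
  have "transpose_mat ?E * Emat m nn j \<noteq> 0\<^sub>m (dim_col ?E) (nn j) \<longleftrightarrow>
        (\<exists>r<dim_col ?E. \<exists>c<nn j. ?E $$ (blk_off nn j + c, r) \<noteq> 0)"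
  proof
    assume "transpose_mat ?E * Emat m nn j \<noteq> 0\<^sub>m (dim_col ?E) (nn j)"
    then obtain r c where "r < dim_col ?E" "c < nn j" "(transpose_mat ?E * Emat m nn j) $$ (r,c) \<noteq> 0"
      by (metis (no_types, lifting) Emat_dims(2) eq_matI index_mult_mat(2,3) index_transpose_mat(2) index_zero_mat)
    then show "\<exists>r<dim_col ?E. \<exists>c<nn j. ?E $$ (blk_off nn j + c, r) \<noteq> 0" using ent by metis
  next
    assume "\<exists>r<dim_col ?E. \<exists>c<nn j. ?E $$ (blk_off nn j + c, r) \<noteq> 0"
    then obtain r c where "r < dim_col ?E" "c < nn j" "?E $$ (blk_off nn j + c, r) \<noteq> 0" by auto
    then show "transpose_mat ?E * Emat m nn j \<noteq> 0\<^sub>m (dim_col ?E) (nn j)"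
      using ent by (metis index_zero_mat(1))
  qed
  also have "\<dots> \<longleftrightarrow> (\<exists>c<nn j. \<exists>i\<in>set ?l. \<exists>c'<nn i. blk_off nn j + c = blk_off nn i + c')"
    using Ecat_nz[OF blk_bound[where nn=nn, OF j]] by blast
  also have "\<dots> \<longleftrightarrow> j \<in> S"
  proof
    assume "\<exists>c<nn j. \<exists>i\<in>set ?l. \<exists>c'<nn i. blk_off nn j + c = blk_off nn i + c'"
    then obtain c i c' where "c < nn j" "i \<in> set ?l" "c' < nn i" "blk_off nn j + c = blk_off nn i + c'" by blast
    then show "j \<in> S" using blk_disj[of nn j c i c'] S by auto
  next
    assume "j \<in> S" then show "\<exists>c<nn j. \<exists>i\<in>set ?l. \<exists>c'<nn i. blk_off nn j + c = blk_off nn i + c'"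
      using S nj by (intro exI[of _ 0]) (auto intro!: bexI[of _ j])
  qed
  finally show ?thesis unfolding Eset_def .
qed



lemma Ms_block:
  fixes A :: "complex mat"
  assumes A: "A \<in> carrier_mat n n"
  shows "s \<cdot>\<^sub>m 1\<^sub>m (n + N) - four_block_mat A (0\<^sub>m n N) (0\<^sub>m N n) (0\<^sub>m N N)
     = four_block_mat (s \<cdot>\<^sub>m 1\<^sub>m n - A) (0\<^sub>m n N) (0\<^sub>m N n) (s \<cdot>\<^sub>m 1\<^sub>m N)"
  using A by (intro eq_matI) auto

lemma block_inv:
  fixes A X :: "complex mat"
  assumes A: "A \<in> carrier_mat n n" and s: "s \<noteq> 0"
    and inv: "inverts_mat (s \<cdot>\<^sub>m 1\<^sub>m n - A) X" "inverts_mat X (s \<cdot>\<^sub>m 1\<^sub>m n - A)"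
  shows "inverts_mat (s \<cdot>\<^sub>m 1\<^sub>m (n + N) - four_block_mat A (0\<^sub>m n N) (0\<^sub>m N n) (0\<^sub>m N N))
           (four_block_mat X (0\<^sub>m n N) (0\<^sub>m N n) ((1/s) \<cdot>\<^sub>m 1\<^sub>m N))"
    "inverts_mat (four_block_mat X (0\<^sub>m n N) (0\<^sub>m N n) ((1/s) \<cdot>\<^sub>m 1\<^sub>m N))
           (s \<cdot>\<^sub>m 1\<^sub>m (n + N) - four_block_mat A (0\<^sub>m n N) (0\<^sub>m N n) (0\<^sub>m N N))"
proof -
  have M: "s \<cdot>\<^sub>m 1\<^sub>m n - A \<in> carrier_mat n n" using A by auto
  have X: "X \<in> carrier_mat n n" using inverse_props[OF M inv] by auto
  have i1: "(s \<cdot>\<^sub>m 1\<^sub>m n - A) * X = 1\<^sub>m n" "X * (s \<cdot>\<^sub>m 1\<^sub>m n - A) = 1\<^sub>m n"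
    using inv X A unfolding inverts_mat_def by auto
  have ss: "(s \<cdot>\<^sub>m 1\<^sub>m N) * ((1/s) \<cdot>\<^sub>m 1\<^sub>m N) = 1\<^sub>m N" "((1/s) \<cdot>\<^sub>m 1\<^sub>m N) * (s \<cdot>\<^sub>m 1\<^sub>m N) = 1\<^sub>m N"
    using s by (auto simp: mult_smult_distrib[of _ N N _ N] mult_smult_assoc_mat[of _ N N _ N])
  show "inverts_mat (s \<cdot>\<^sub>m 1\<^sub>m (n + N) - four_block_mat A (0\<^sub>m n N) (0\<^sub>m N n) (0\<^sub>m N N))
           (four_block_mat X (0\<^sub>m n N) (0\<^sub>m N n) ((1/s) \<cdot>\<^sub>m 1\<^sub>m N))"
    unfolding Ms_block[OF A] inverts_mat_def
    by (subst mult_four_block_mat[OF M zero_carrier_mat zero_carrier_mat smult_carrier_mat[OF one_carrier_mat] X zero_carrier_mat zero_carrier_mat smult_carrier_mat[OF one_carrier_mat]]) (use A M X i1 ss in auto)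
  show "inverts_mat (four_block_mat X (0\<^sub>m n N) (0\<^sub>m N n) ((1/s) \<cdot>\<^sub>m 1\<^sub>m N))
           (s \<cdot>\<^sub>m 1\<^sub>m (n + N) - four_block_mat A (0\<^sub>m n N) (0\<^sub>m N n) (0\<^sub>m N N))"
    unfolding Ms_block[OF A] inverts_mat_def
    by (subst mult_four_block_mat[OF X zero_carrier_mat zero_carrier_mat smult_carrier_mat[OF one_carrier_mat] M zero_carrier_mat zero_carrier_mat smult_carrier_mat[OF one_carrier_mat]]) (use A M X i1 ss in auto)
qed

lemma block_prod:
  fixes C B X Et E :: "complex mat"
  assumes C: "C \<in> carrier_mat q n" and B: "B \<in> carrier_mat n p" and X: "X \<in> carrier_mat n n"
    and Et: "Et \<in> carrier_mat r N" and E: "E \<in> carrier_mat N pe"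
  shows "four_block_mat C (0\<^sub>m q N) (0\<^sub>m r n) Et * four_block_mat X (0\<^sub>m n N) (0\<^sub>m N n) ((1/s) \<cdot>\<^sub>m 1\<^sub>m N)
      * four_block_mat B (0\<^sub>m n pe) (0\<^sub>m N p) E
    = four_block_mat (C * X * B) (0\<^sub>m q pe) (0\<^sub>m r p) ((1/s) \<cdot>\<^sub>m (Et * E))"
proof -
  have "four_block_mat C (0\<^sub>m q N) (0\<^sub>m r n) Et * four_block_mat X (0\<^sub>m n N) (0\<^sub>m N n) ((1/s) \<cdot>\<^sub>m 1\<^sub>m N)
     = four_block_mat (C * X) (0\<^sub>m q N) (0\<^sub>m r n) ((1/s) \<cdot>\<^sub>m Et)"
    by (subst mult_four_block_mat[OF C zero_carrier_mat zero_carrier_mat Et X zero_carrier_mat zero_carrier_mat smult_carrier_mat[OF one_carrier_mat]]) (use C X Et in \<open>auto simp: mult_smult_distrib[of _ r N _ N]\<close>)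
  moreover have "four_block_mat (C * X) (0\<^sub>m q N) (0\<^sub>m r n) ((1/s) \<cdot>\<^sub>m Et) * four_block_mat B (0\<^sub>m n pe) (0\<^sub>m N p) E
     = four_block_mat (C * X * B) (0\<^sub>m q pe) (0\<^sub>m r p) ((1/s) \<cdot>\<^sub>m (Et * E))"
    by (subst mult_four_block_mat[OF mult_carrier_mat[OF C X] zero_carrier_mat zero_carrier_mat smult_carrier_mat[OF Et] B zero_carrier_mat zero_carrier_mat E]) (use C X Et B E in \<open>auto simp: mult_smult_assoc_mat[of _ r N _ pe]\<close>)
  ultimately show ?thesis by simp
qed

lemma four_block_zero_iff:
  fixes P1 P4 :: "'a::zero mat"
  assumes "P1 \<in> carrier_mat a c" "P4 \<in> carrier_mat b d"
  shows "four_block_mat P1 (0\<^sub>m a d) (0\<^sub>m b c) P4 = 0\<^sub>m (a + b) (c + d) \<longleftrightarrow> P1 = 0\<^sub>m a c \<and> P4 = 0\<^sub>m b d"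
proof
  assume h: "four_block_mat P1 (0\<^sub>m a d) (0\<^sub>m b c) P4 = 0\<^sub>m (a + b) (c + d)"
  have "P1 $$ (i,j) = 0" if "i < a" "j < c" for i j
    using arg_cong[OF h, of "\<lambda>M. M $$ (i,j)"] that assms by auto
  moreover have "P4 $$ (i,j) = 0" if "i < b" "j < d" for i j
    using arg_cong[OF h, of "\<lambda>M. M $$ (i + a, j + c)"] that assms by auto
  ultimately show "P1 = 0\<^sub>m a c \<and> P4 = 0\<^sub>m b d" using assms by (auto intro!: eq_matI)
next
  assume "P1 = 0\<^sub>m a c \<and> P4 = 0\<^sub>m b d"
  then show "four_block_mat P1 (0\<^sub>m a d) (0\<^sub>m b c) P4 = 0\<^sub>m (a + b) (c + d)" by simp
qed

lemma cr_mult: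
  fixes F G :: "real mat"
  assumes "F \<in> carrier_mat a b" "G \<in> carrier_mat b c"
  shows "map_mat complex_of_real (F * G) = map_mat complex_of_real F * map_mat complex_of_real G"
  using assms by (intro eq_matI) (auto simp: scalar_prod_def intro!: sum.cong)

lemma cr_zero_iff: "map_mat complex_of_real F = 0\<^sub>m a b \<longleftrightarrow> F = 0\<^sub>m a b"
proof
  assume h: "map_mat complex_of_real F = 0\<^sub>m a b"
  have d: "dim_row F = a" "dim_col F = b" using arg_cong[OF h, of dim_row] arg_cong[OF h, of dim_col] by auto
  show "F = 0\<^sub>m a b"
  proof (rule eq_matI)
    fix i j assume "i < dim_row (0\<^sub>m a b :: real mat)" "j < dim_col (0\<^sub>m a b :: real mat)"
    then show "F $$ (i,j) = 0\<^sub>m a b $$ (i,j)" using arg_cong[OF h, of "\<lambda>M. M $$ (i,j)"] d by auto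
  qed (use d in auto)
qed (auto intro!: eq_matI)

lemma smult_zero_iff:
  fixes M :: "complex mat"
  assumes "k \<noteq> 0" "M \<in> carrier_mat a b"
  shows "k \<cdot>\<^sub>m M = 0\<^sub>m a b \<longleftrightarrow> M = 0\<^sub>m a b"
proof
  assume h: "k \<cdot>\<^sub>m M = 0\<^sub>m a b"
  show "M = 0\<^sub>m a b"
  proof (rule eq_matI)
    fix i j assume "i < dim_row (0\<^sub>m a b :: complex mat)" "j < dim_col (0\<^sub>m a b :: complex mat)"
    then show "M $$ (i,j) = 0\<^sub>m a b $$ (i,j)" using arg_cong[OF h, of "\<lambda>M. M $$ (i,j)"] assms by auto
  qed (use assms in auto)
qed simp



abbreviation cr :: "real mat \<Rightarrow> complex mat" where "cr \<equiv> map_mat complex_of_real"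

lemma exists_regular:
  fixes A :: "complex mat"
  assumes A: "A \<in> carrier_mat n n"
  shows "\<exists>s. s \<noteq> 0 \<and> det (s \<cdot>\<^sub>m 1\<^sub>m n - A) \<noteq> 0"
proof -
  have cp: "poly (char_poly A) s = det (s \<cdot>\<^sub>m 1\<^sub>m n - A)" for s
    unfolding char_poly_def
    by (rule poly_det_cong[of _ n]) (use A in \<open>auto simp: char_poly_matrix_def\<close>)
  have "char_poly A \<noteq> 0" using degree_monic_char_poly[OF A] by auto
  then have fin: "finite ({s. poly (char_poly A) s = 0} \<union> {0})" using poly_roots_finite by auto
  obtain s where s: "s \<notin> {s. poly (char_poly A) s = 0} \<union> {0}"
    using ex_new_if_finite[OF infinite_UNIV_char_0 fin] by auto
  then show ?thesis using cp[of s] by auto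
qed

lemma arc:
  fixes n m :: nat and A :: "real mat" and B C :: "nat \<Rightarrow> real mat"
    and p q nn :: "nat \<Rightarrow> nat" and Nb :: "nat \<Rightarrow> nat set"
  assumes A: "A \<in> carrier_mat n n"
    and B: "\<And>i. i < m \<Longrightarrow> B i \<in> carrier_mat n (p i)"
    and C: "\<And>i. i < m \<Longrightarrow> C i \<in> carrier_mat (q i) n"
    and Nb: "\<And>i. i < m \<Longrightarrow> Nb i \<subseteq> {..<m} \<and> i \<in> Nb i"
    and nn: "\<And>i. i < m \<Longrightarrow> nn i > 0"
    and i: "i < m" and j: "j < m"
  shows "transfer_nonzero (ext_A m nn A) (ext_B m nn B j) (ext_C m nn Nb C i)
     \<longleftrightarrow> transfer_nonzero A (B j) (C i) \<or> j \<in> Nb i"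
proof -
  define N where "N = (\<Sum>k<m. nn k)"
  have Npos: "N > 0" unfolding N_def using nn[OF i] i
    by (metis finite_lessThan lessThan_iff not_gr_zero member_le_sum le_zero_eq zero_le)
  define Es where "Es = Eset m nn (Nb i)"
  define r where "r = dim_col Es"
  have Es: "Es \<in> carrier_mat N r" unfolding Es_def r_def N_def Eset_def
    by (auto simp: Ecat_dims)
  define Et where "Et = transpose_mat Es"
  have Et: "Et \<in> carrier_mat r N" using Es unfolding Et_def by auto
  define E where "E = Emat m nn j"
  have E: "E \<in> carrier_mat N (nn j)" unfolding E_def N_def by (auto intro: carrier_matI)
  have Bj: "B j \<in> carrier_mat n (p j)" using B[OF j] .
  have Ci: "C i \<in> carrier_mat (q i) n" using C[OF i] .
  have finNb: "finite (Nb i)" using Nb[OF i] finite_subset by blast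
  have ET: "Et * E \<noteq> 0\<^sub>m r (nn j) \<longleftrightarrow> j \<in> Nb i"
    using ET_nz[where nn=nn, OF finNb j nn[OF j]] unfolding Et_def E_def r_def Es_def .
  have ETc: "cr Et * cr E \<noteq> 0\<^sub>m r (nn j) \<longleftrightarrow> j \<in> Nb i"
    using ET cr_mult[OF Et E] cr_zero_iff by metis
  let ?A = "cr A" and ?B = "cr (B j)" and ?C = "cr (C i)"
  have cA: "?A \<in> carrier_mat n n" using A by auto
  have cB: "?B \<in> carrier_mat n (p j)" using Bj by auto
  have cC: "?C \<in> carrier_mat (q i) n" using Ci by auto
  have eA: "cr (ext_A m nn A) = four_block_mat ?A (0\<^sub>m n N) (0\<^sub>m N n) (0\<^sub>m N N)"
    unfolding ext_A_def Let_def N_def[symmetric] using A by (intro eq_matI) auto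
  have dA: "dim_row (ext_A m nn A) = n + N" unfolding ext_A_def Let_def N_def[symmetric] using A by auto
  have eB: "cr (ext_B m nn B j) = four_block_mat ?B (0\<^sub>m n (nn j)) (0\<^sub>m N (p j)) (cr E)"
    unfolding ext_B_def Let_def N_def[symmetric] E_def[symmetric] using Bj E by (intro eq_matI) auto
  have dB: "dim_col (ext_B m nn B j) = p j + nn j"
    unfolding ext_B_def Let_def N_def[symmetric] E_def[symmetric] using Bj E by auto
  have eC: "cr (ext_C m nn Nb C i) = four_block_mat ?C (0\<^sub>m (q i) N) (0\<^sub>m r n) (cr Et)"
    unfolding ext_C_def Let_def N_def[symmetric] Es_def[symmetric] Et_def[symmetric] using Ci Et
    by (intro eq_matI) auto
  have dC: "dim_row (ext_C m nn Nb C i) = q i + r"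
    unfolding ext_C_def Let_def N_def[symmetric] Es_def[symmetric] Et_def[symmetric] using Ci Et by auto
  have dA0: "dim_row A = n" "dim_row (C i) = q i" "dim_col (B j) = p j" using A Bj Ci by auto
  define Xb where "Xb s X = four_block_mat X (0\<^sub>m n N) (0\<^sub>m N n) ((1/s) \<cdot>\<^sub>m 1\<^sub>m N)" for s :: complex and X
  have cEt: "cr Et \<in> carrier_mat r N" using Et by auto
  have cE: "cr E \<in> carrier_mat N (nn j)" using E by auto
  have prod: "cr (ext_C m nn Nb C i) * Xb s X * cr (ext_B m nn B j) =
      four_block_mat (?C * X * ?B) (0\<^sub>m (q i) (nn j)) (0\<^sub>m r (p j)) ((1/s) \<cdot>\<^sub>m (cr Et * cr E))"
    if X: "X \<in> carrier_mat n n" for s X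
    unfolding eC eB Xb_def by (rule block_prod[OF cC cB X cEt cE])
  have prodnz: "cr (ext_C m nn Nb C i) * Xb s X * cr (ext_B m nn B j) \<noteq> 0\<^sub>m (q i + r) (p j + nn j)
     \<longleftrightarrow> ?C * X * ?B \<noteq> 0\<^sub>m (q i) (p j) \<or> j \<in> Nb i"
    if X: "X \<in> carrier_mat n n" and s: "s \<noteq> 0" for s X
    unfolding prod[OF X] ETc[symmetric]
    by (subst four_block_zero_iff) (use X cC cB cEt cE s smult_zero_iff[OF _ mult_carrier_mat[OF cEt cE]] in auto)
  show ?thesis
  proof
    assume "transfer_nonzero (ext_A m nn A) (ext_B m nn B j) (ext_C m nn Nb C i)"
    then obtain s Xb0 where
      inv1: "inverts_mat (s \<cdot>\<^sub>m 1\<^sub>m (n + N) - four_block_mat ?A (0\<^sub>m n N) (0\<^sub>m N n) (0\<^sub>m N N)) Xb0"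
      and inv2: "inverts_mat Xb0 (s \<cdot>\<^sub>m 1\<^sub>m (n + N) - four_block_mat ?A (0\<^sub>m n N) (0\<^sub>m N n) (0\<^sub>m N N))"
      and nz: "cr (ext_C m nn Nb C i) * Xb0 * cr (ext_B m nn B j) \<noteq> 0\<^sub>m (q i + r) (p j + nn j)"
      unfolding transfer_nonzero_def eA dA dB dC by blast
    have Mb: "s \<cdot>\<^sub>m 1\<^sub>m (n + N) - four_block_mat ?A (0\<^sub>m n N) (0\<^sub>m N n) (0\<^sub>m N N) \<in> carrier_mat (n+N) (n+N)"
      using cA by auto
    have "det (s \<cdot>\<^sub>m 1\<^sub>m (n + N) - four_block_mat ?A (0\<^sub>m n N) (0\<^sub>m N n) (0\<^sub>m N N)) \<noteq> 0"
      using inverse_props[OF Mb inv1 inv2] by auto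
    moreover have "det (s \<cdot>\<^sub>m 1\<^sub>m (n + N) - four_block_mat ?A (0\<^sub>m n N) (0\<^sub>m N n) (0\<^sub>m N N))
       = det (s \<cdot>\<^sub>m 1\<^sub>m n - ?A) * s ^ N"
      unfolding Ms_block[OF cA]
      by (subst det_four_block_mat_upper_right_zero[of _ n _ N]) (use cA in auto)
    ultimately have s: "s \<noteq> 0" and d: "det (s \<cdot>\<^sub>m 1\<^sub>m n - ?A) \<noteq> 0" using Npos by auto
    have M: "s \<cdot>\<^sub>m 1\<^sub>m n - ?A \<in> carrier_mat n n" using cA by auto
    define X where "X = (1 / det (s \<cdot>\<^sub>m 1\<^sub>m n - ?A)) \<cdot>\<^sub>m adj_mat (s \<cdot>\<^sub>m 1\<^sub>m n - ?A)"
    note xi = adj_inverse[OF M d, folded X_def]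
    have X: "X \<in> carrier_mat n n" using inverse_props[OF M xi] by auto
    note bi = block_inv[OF cA s xi, of N, folded Xb_def]
    have "Xb0 = Xb s X" using unique_inverse[OF Mb inv1 inv2 bi] .
    with nz prodnz[OF X s] have "?C * X * ?B \<noteq> 0\<^sub>m (q i) (p j) \<or> j \<in> Nb i" by auto
    then show "transfer_nonzero A (B j) (C i) \<or> j \<in> Nb i"
      unfolding transfer_nonzero_def dA0 using xi by blast
  next
    assume "transfer_nonzero A (B j) (C i) \<or> j \<in> Nb i"
    then obtain s X where s: "s \<noteq> 0" and xi: "inverts_mat (s \<cdot>\<^sub>m 1\<^sub>m n - ?A) X" "inverts_mat X (s \<cdot>\<^sub>m 1\<^sub>m n - ?A)"
      and nz: "?C * X * ?B \<noteq> 0\<^sub>m (q i) (p j) \<or> j \<in> Nb i"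
    proof
      assume "transfer_nonzero A (B j) (C i)"
      then obtain s0 X0 where "inverts_mat (s0 \<cdot>\<^sub>m 1\<^sub>m n - ?A) X0" "inverts_mat X0 (s0 \<cdot>\<^sub>m 1\<^sub>m n - ?A)"
        "?C * X0 * ?B \<noteq> 0\<^sub>m (q i) (p j)"
        unfolding transfer_nonzero_def dA0 by blast
      from tn_complex[OF cA cB cC this, of "{0}"] obtain s where
        s: "s \<noteq> 0" "det (s \<cdot>\<^sub>m 1\<^sub>m n - ?A) \<noteq> 0" "?C * adj_mat (s \<cdot>\<^sub>m 1\<^sub>m n - ?A) * ?B \<noteq> 0\<^sub>m (q i) (p j)"
        by auto
      have M: "s \<cdot>\<^sub>m 1\<^sub>m n - ?A \<in> carrier_mat n n" using cA by auto
      define X where "X = (1 / det (s \<cdot>\<^sub>m 1\<^sub>m n - ?A)) \<cdot>\<^sub>m adj_mat (s \<cdot>\<^sub>m 1\<^sub>m n - ?A)"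
      note xi = adj_inverse[OF M s(2), folded X_def]
      have adj: "adj_mat (s \<cdot>\<^sub>m 1\<^sub>m n - ?A) \<in> carrier_mat n n" using adj_mat(1)[OF M] .
      have "?C * X * ?B = (1 / det (s \<cdot>\<^sub>m 1\<^sub>m n - ?A)) \<cdot>\<^sub>m (?C * adj_mat (s \<cdot>\<^sub>m 1\<^sub>m n - ?A) * ?B)"
        unfolding X_def using adj cC cB
        by (simp add: mult_smult_distrib[OF cC adj] mult_smult_assoc_mat[OF mult_carrier_mat[OF cC adj] cB] del: assoc_mult_mat)
      then have "?C * X * ?B \<noteq> 0\<^sub>m (q i) (p j)"
        using s smult_zero_iff[of "1 / det (s \<cdot>\<^sub>m 1\<^sub>m n - ?A)" "?C * adj_mat (s \<cdot>\<^sub>m 1\<^sub>m n - ?A) * ?B" "q i" "p j"]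
          adj cC cB by auto
      then show ?thesis using that[OF s(1) xi] by auto
    next
      assume jN: "j \<in> Nb i"
      obtain s where s: "s \<noteq> 0" "det (s \<cdot>\<^sub>m 1\<^sub>m n - ?A) \<noteq> 0" using exists_regular[OF cA] by auto
      have M: "s \<cdot>\<^sub>m 1\<^sub>m n - ?A \<in> carrier_mat n n" using cA by auto
      show ?thesis using that[OF s(1) adj_inverse[OF M s(2)]] jN by auto
    qed
    have M: "s \<cdot>\<^sub>m 1\<^sub>m n - ?A \<in> carrier_mat n n" using cA by auto
    have X: "X \<in> carrier_mat n n" using inverse_props[OF M xi] by auto
    note bi = block_inv[OF cA s xi, of N, folded Xb_def]
    have "cr (ext_C m nn Nb C i) * Xb s X * cr (ext_B m nn B j) \<noteq> 0\<^sub>m (q i + r) (p j + nn j)"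
      using prodnz[OF X s] nz by auto
    then show "transfer_nonzero (ext_A m nn A) (ext_B m nn B j) (ext_C m nn Nb C i)"
      unfolding transfer_nonzero_def eA dA dB dC using bi by blast
  qed
qed


theorem proposition3:
  fixes n m :: nat and A :: "real mat" and B C :: "nat \<Rightarrow> real mat"
    and p q nn :: "nat \<Rightarrow> nat" and Nb :: "nat \<Rightarrow> nat set"
  assumes "A \<in> carrier_mat n n"
    and "\<And>i. i < m \<Longrightarrow> B i \<in> carrier_mat n (p i)"
    and "\<And>i. i < m \<Longrightarrow> C i \<in> carrier_mat (q i) n"
    and "\<And>i. i < m \<Longrightarrow> Nb i \<subseteq> {..<m} \<and> i \<in> Nb i"
    and "\<And>i. i < m \<Longrightarrow> nn i > 0"
  shows "strongly_connected m
           (transfer_graph m (ext_A m nn A) (ext_B m nn B) (ext_C m nn Nb C))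
     \<longleftrightarrow> strongly_connected m (transfer_graph m A B C \<union> neighbor_graph m Nb)"
proof -
  have "transfer_graph m (ext_A m nn A) (ext_B m nn B) (ext_C m nn Nb C)
     = transfer_graph m A B C \<union> neighbor_graph m Nb"
    unfolding transfer_graph_def neighbor_graph_def
    using arc[OF assms] by auto
  then show ?thesis by simp
qed

end
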